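(* Let $n \ge 2$, $k \ge 1$ and $n_i, m_i \in \mathbb{Z}\setminus\{0\}$ for $1 \le i \le k$. If the group presented by $\mathcal{P}_n(n_1,\dots,n_k;m_1,\dots,m_k)$ is isomorphic to $Q_{4n}$, then the map $x \mapsto x$, $y \mapsto y$ induces a group isomorphism from the group presented by $\mathcal{P}_n(n_1,\dots,n_k;m_1,\dots,m_k)$ to $Q_{4n}$.
   Context: $Q_{4n} = \langle x, y \mid x^n y^{-2}, xyxy^{-1} \rangle$. With $n_{k+1} = 1 - \sum_{i=1}^k n_i$, $m_{k+1} = 1 - \sum_{i=1}^k m_i$, $\mathcal{P}_n(n_1,\dots,n_k;m_1,\dots,m_k) = \langle x, y \mid x^n y^{-2},\ x^{n_1} y x^{m_1} y^{-1} \cdots x^{n_{k+1}} y x^{m_{k+1}} y^{-1} \rangle$. *)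

theory Defs
  imports "HOL-Algebra.Group"
begin

text \<open>Words in a free group: letters (True, g) = g, (False, g) = g inverse.\<close>
type_synonym 'a fword = "(bool \<times> 'a) list"

definition inv_letter :: "bool \<times> 'a \<Rightarrow> bool \<times> 'a" where
  "inv_letter l = (\<not> fst l, snd l)"

inductive_set pres_rel :: "'a fword set \<Rightarrow> ('a fword \<times> 'a fword) set"
  for R :: "'a fword set" where
  prefl: "(w, w) \<in> pres_rel R"
| psym: "(u, v) \<in> pres_rel R \<Longrightarrow> (v, u) \<in> pres_rel R"
| ptrans: "(u, v) \<in> pres_rel R \<Longrightarrow> (v, w) \<in> pres_rel R \<Longrightarrow> (u, w) \<in> pres_rel R"
| pcancel: "(u @ [l, inv_letter l] @ v, u @ v) \<in> pres_rel R"
| prel: "r \<in> R \<Longrightarrow> (u @ r @ v, u @ v) \<in> pres_rel R"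

definition presented_group :: "'a fword set \<Rightarrow> 'a fword set monoid" where
  "presented_group R =
     \<lparr> carrier = UNIV // pres_rel R,
       monoid.mult = (\<lambda>A B. \<Union>a\<in>A. \<Union>b\<in>B. pres_rel R `` {a @ b}),
       one = pres_rel R `` {[]} \<rparr>"

definition gen_class :: "'a fword set \<Rightarrow> 'a \<Rightarrow> 'a fword set" where
  "gen_class R g = pres_rel R `` {[(True, g)]}"

definition wpow :: "'a \<Rightarrow> int \<Rightarrow> 'a fword" where
  "wpow g z = replicate (nat \<bar>z\<bar>) (0 \<le> z, g)"

datatype gen = X | Y

definition Q_rels :: "nat \<Rightarrow> gen fword set" where
  "Q_rels n = { wpow X (int n) @ wpow Y (-2),
                [(True, X), (True, Y), (True, X), (False, Y)] }"

definition Q_group :: "nat \<Rightarrow> gen fword set monoid" where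
  "Q_group n = presented_group (Q_rels n)"

definition P_rels :: "nat \<Rightarrow> int list \<Rightarrow> int list \<Rightarrow> gen fword set" where
  "P_rels n ns ms = { wpow X (int n) @ wpow Y (-2),
     concat (map (\<lambda>(a, b). wpow X a @ [(True, Y)] @ wpow X b @ [(False, Y)])
                 (zip (ns @ [1 - sum_list ns]) (ms @ [1 - sum_list ms]))) }"

definition P_group :: "nat \<Rightarrow> int list \<Rightarrow> int list \<Rightarrow> gen fword set monoid" where
  "P_group n ns ms = presented_group (P_rels n ns ms)"

end

theory Submission
  imports Defs
begin

definition peq :: "'a fword set \<Rightarrow> 'a fword \<Rightarrow> 'a fword \<Rightarrow> bool" where
  "peq R u v = ((u, v) \<in> pres_rel R)"

lemma peq_trans[trans]: "peq R u v \<Longrightarrow> peq R v w \<Longrightarrow> peq R u w"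
  unfolding peq_def by (rule pres_rel.ptrans)

lemma pr_cong0: "(u, v) \<in> pres_rel R \<Longrightarrow> (a @ u @ b, a @ v @ b) \<in> pres_rel R"
proof (induction rule: pres_rel.induct)
  case (prefl w) show ?case by (rule pres_rel.prefl)
next
  case (psym u v) then show ?case by (blast intro: pres_rel.psym)
next
  case (ptrans u v w) then show ?case by (blast intro: pres_rel.ptrans)
next
  case (pcancel u l v)
  have "((a@u) @ [l, inv_letter l] @ (v@b), (a@u) @ (v@b)) \<in> pres_rel R" by (rule pres_rel.pcancel)
  then show ?case by simp
next
  case (prel r u v)
  have "((a@u) @ r @ (v@b), (a@u) @ (v@b)) \<in> pres_rel R" by (rule pres_rel.prel[OF prel])
  then show ?case by simp
qed

lemma pr_cong: "peq R u v \<Longrightarrow> peq R (a @ u @ b) (a @ v @ b)"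
  unfolding peq_def by (rule pr_cong0)
lemma pr_congL: "peq R u v \<Longrightarrow> peq R (a @ u) (a @ v)"
  using pr_cong[of R u v a "[]"] by simp
lemma pr_congR: "peq R u v \<Longrightarrow> peq R (u @ b) (v @ b)"
  using pr_cong[of R u v "[]" b] by simp
lemma pr_sym: "peq R u v \<Longrightarrow> peq R v u" unfolding peq_def by (rule pres_rel.psym)
lemma pr_refl: "peq R u u" unfolding peq_def by (rule pres_rel.prefl)
lemma pr_eqrefl: "u = v \<Longrightarrow> peq R u v" by (simp add: pr_refl)
lemma pr_rel: "r \<in> R \<Longrightarrow> peq R (u @ r @ v) (u @ v)" unfolding peq_def by (rule pres_rel.prel)

lemma equiv_pr: "equiv UNIV (pres_rel R)"
  by (rule equivI) (auto simp: refl_on_def sym_def trans_def intro: pres_rel.intros)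

lemma pr_canc: "peq R (u @ [(b, g), (\<not> b, g)] @ v) (u @ v)"
  using pres_rel.pcancel[of u "(b,g)" v R] by (simp add: inv_letter_def peq_def)

lemma wpow_up: "0 \<le> b \<Longrightarrow> wpow g (b + 1) = wpow g b @ [(True, g)]"
  unfolding wpow_def
  by (simp add: nat_add_distrib replicate_append_same[symmetric])
lemma wpow_down: "b \<le> 0 \<Longrightarrow> wpow g (b - 1) = wpow g b @ [(False, g)]"
proof -
  assume "b \<le> 0"
  then have "nat \<bar>b - 1\<bar> = Suc (nat \<bar>b\<bar>)" by simp
  then show ?thesis using \<open>b \<le> 0\<close> unfolding wpow_def
    by (cases "b = 0") (simp_all add: replicate_append_same)
qed
lemma wpow_0[simp]: "wpow g 0 = []" by (simp add: wpow_def)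
lemma wpow_1: "wpow g 1 = [(True, g)]" by (simp add: wpow_def)
lemma wpow_m1: "wpow g (-1) = [(False, g)]" by (simp add: wpow_def)

lemma L1: "peq R (wpow g c @ [(True, g)]) (wpow g (c + 1))"
proof (cases "0 \<le> c")
  case True then show ?thesis by (simp add: wpow_up pr_refl)
next
  case False
  then have "wpow g c = wpow g (c + 1) @ [(False, g)]"
    using wpow_down[of "c+1" g] by simp
  then show ?thesis using pr_canc[of R "wpow g (c+1)" False g "[]"] by simp
qed

lemma L2: "peq R (wpow g c @ [(False, g)]) (wpow g (c - 1))"
proof (cases "c \<le> 0")
  case True then show ?thesis by (simp add: wpow_down pr_refl)
next
  case False
  then have "wpow g c = wpow g (c - 1) @ [(True, g)]"
    using wpow_up[of "c-1" g] by simp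
  then show ?thesis using pr_canc[of R "wpow g (c-1)" True g "[]"] by simp
qed

lemma wpow_add: "peq R (wpow g a @ wpow g b) (wpow g (a + b))"
proof (induction b rule: int_induct[where k=0])
  case base then show ?case by (simp add: pr_refl)
next
  case (step1 i)
  have "wpow g a @ wpow g (i+1) = (wpow g a @ wpow g i) @ [(True, g)]"
    using step1 by (simp add: wpow_up)
  also have "peq R \<dots> (wpow g (a + i) @ [(True, g)])" by (rule pr_congR[OF step1(2)])
  also have "peq R \<dots> (wpow g (a + i + 1))" by (rule L1)
  finally show ?case by (simp add: add.assoc)
next
  case (step2 i)
  have "wpow g a @ wpow g (i-1) = (wpow g a @ wpow g i) @ [(False, g)]"
    using step2 by (simp add: wpow_down)
  also have "peq R \<dots> (wpow g (a + i) @ [(False, g)])" by (rule pr_congR[OF step2(2)])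
  also have "peq R \<dots> (wpow g (a + i - 1))" by (rule L2)
  finally show ?case by (simp add: algebra_simps)
qed


lemma Qr1: "peq (Q_rels n) (u @ (wpow X (int n) @ [(False,Y),(False,Y)]) @ v) (u @ v)"
  by (rule pr_rel) (simp add: Q_rels_def wpow_def numeral_2_eq_2)
lemma Qr2: "peq (Q_rels n) (u @ [(True, X), (True, Y), (True, X), (False, Y)] @ v) (u @ v)"
  by (rule pr_rel) (simp add: Q_rels_def)

lemma D1: "peq (Q_rels n) [(True,Y),(True,X)] [(False,X),(True,Y)]"
proof -
  have "peq (Q_rels n) [(False,X),(True,X),(True,Y),(True,X),(False,Y),(True,Y)] [(True,Y),(True,X),(False,Y),(True,Y)]"
    using pr_canc[of "Q_rels n" "[]" False X "[(True,Y),(True,X),(False,Y),(True,Y)]"] by simp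
  also have "peq (Q_rels n) \<dots> [(True,Y),(True,X)]"
    using pr_canc[of "Q_rels n" "[(True,Y),(True,X)]" False Y "[]"] by simp
  finally have a: "peq (Q_rels n) [(False,X),(True,X),(True,Y),(True,X),(False,Y),(True,Y)] [(True,Y),(True,X)]" .
  have b: "peq (Q_rels n) [(False,X),(True,X),(True,Y),(True,X),(False,Y),(True,Y)] [(False,X),(True,Y)]"
    using Qr2[of n "[(False,X)]" "[(True,Y)]"] by simp
  show ?thesis using pr_sym[OF a] b by (rule peq_trans)
qed

lemma D2: "peq (Q_rels n) [(True,Y),(False,X)] [(True,X),(True,Y)]"
proof -
  have "peq (Q_rels n) [(True,X),(True,Y)] [(True,X),(True,Y),(True,X),(False,X)]"
    using pr_sym[OF pr_canc[of "Q_rels n" "[(True,X),(True,Y)]" True X "[]"]] by simp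
  also have "peq (Q_rels n) \<dots> [(True,X),(False,X),(True,Y),(False,X)]"
    using pr_cong[OF D1[of n], of "[(True,X)]" "[(False,X)]"] by simp
  also have "peq (Q_rels n) \<dots> [(True,Y),(False,X)]"
    using pr_canc[of "Q_rels n" "[]" True X "[(True,Y),(False,X)]"] by simp
  finally show ?thesis by (rule pr_sym)
qed

lemma D3: "peq (Q_rels n) (wpow X (int n)) [(True,Y),(True,Y)]"
proof -
  have "peq (Q_rels n) (wpow X (int n)) (wpow X (int n) @ [(False,Y),(True,Y)])"
    using pr_sym[OF pr_canc[of "Q_rels n" "wpow X (int n)" False Y "[]"]] by simp
  also have "peq (Q_rels n) \<dots> (wpow X (int n) @ [(False,Y),(False,Y),(True,Y),(True,Y)])"
    using pr_sym[OF pr_canc[of "Q_rels n" "wpow X (int n) @ [(False,Y)]" False Y "[(True,Y)]"]] by simp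
  also have "peq (Q_rels n) \<dots> [(True,Y),(True,Y)]"
    using Qr1[of n "[]" "[(True,Y),(True,Y)]"] by simp
  finally show ?thesis .
qed

lemma D4: "peq (Q_rels n) [(False,Y)] (wpow X (- int n) @ [(True,Y)])"
proof -
  have "peq (Q_rels n) (wpow X (- int n) @ [(True,Y)]) (wpow X (- int n) @ [(True,Y),(True,Y),(False,Y)])"
    using pr_sym[OF pr_canc[of "Q_rels n" "wpow X (- int n) @ [(True,Y)]" True Y "[]"]] by simp
  also have "peq (Q_rels n) \<dots> (wpow X (- int n) @ wpow X (int n) @ [(False,Y)])"
    using pr_cong[OF pr_sym[OF D3[of n]], of "wpow X (- int n)" "[(False,Y)]"] by simp
  also have "peq (Q_rels n) \<dots> (wpow X 0 @ [(False,Y)])"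
    using pr_congR[OF wpow_add[of "Q_rels n" X "- int n" "int n"], of "[(False,Y)]"] by simp
  finally show ?thesis by (simp add: pr_sym)
qed

lemma E: "peq (Q_rels n) ([(True,Y)] @ wpow X m) (wpow X (- m) @ [(True,Y)])"
proof (induction m rule: int_induct[where k=0])
  case base then show ?case by (simp add: pr_refl)
next
  case (step1 i)
  have "[(True,Y)] @ wpow X (i+1) = ([(True,Y)] @ wpow X i) @ [(True, X)]"
    using step1 by (simp add: wpow_up)
  also have "peq (Q_rels n) \<dots> (wpow X (- i) @ [(True,Y)] @ [(True, X)])"
    using pr_congR[OF step1(2)] by simp
  also have "peq (Q_rels n) \<dots> (wpow X (- i) @ [(False,X)] @ [(True, Y)])"
    using pr_congL[OF D1] by simp
  also have "peq (Q_rels n) \<dots> (wpow X (- i - 1) @ [(True, Y)])"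
    using pr_congR[OF L2] by simp
  also have "- i - 1 = - (i + 1)" by simp
  finally show ?case .
next
  case (step2 i)
  have "[(True,Y)] @ wpow X (i-1) = ([(True,Y)] @ wpow X i) @ [(False, X)]"
    using step2 by (simp add: wpow_down)
  also have "peq (Q_rels n) \<dots> (wpow X (- i) @ [(True,Y)] @ [(False, X)])"
    using pr_congR[OF step2(2)] by simp
  also have "peq (Q_rels n) \<dots> (wpow X (- i) @ [(True,X)] @ [(True, Y)])"
    using pr_congL[OF D2] by simp
  also have "peq (Q_rels n) \<dots> (wpow X (- i + 1) @ [(True, Y)])"
    using pr_congR[OF L1[of "Q_rels n" X "- i"], of "[(True, Y)]"] by simp
  also have "- i + 1 = - (i - 1)" by simp
  finally show ?case .
qed

lemma F: "peq (Q_rels n) (wpow X a @ [(True,Y)] @ wpow X b @ [(False,Y)]) (wpow X (a - b))"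
proof -
  have "peq (Q_rels n) (wpow X a @ ([(True,Y)] @ wpow X b) @ [(False,Y)]) (wpow X a @ (wpow X (-b) @ [(True,Y)]) @ [(False,Y)])"
    by (rule pr_cong[OF E])
  also have "peq (Q_rels n) \<dots> (wpow X a @ wpow X (-b))"
    using pr_canc[of "Q_rels n" "wpow X a @ wpow X (-b)" True Y "[]"] by simp
  also have "peq (Q_rels n) \<dots> (wpow X (a - b))"
    using wpow_add[of "Q_rels n" X a "-b"] by simp
  finally show ?thesis by simp
qed

lemma G: "length as = length bs \<Longrightarrow>
  peq (Q_rels n) (concat (map (\<lambda>(a, b). wpow X a @ [(True, Y)] @ wpow X b @ [(False, Y)]) (zip as bs)))
     (wpow X (sum_list as - sum_list bs))"
proof (induction as bs rule: list_induct2)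
  case Nil then show ?case by (simp add: pr_refl)
next
  case (Cons a as b bs)
  have "concat (map (\<lambda>(a, b). wpow X a @ [(True, Y)] @ wpow X b @ [(False, Y)]) (zip (a#as) (b#bs)))
     = (wpow X a @ [(True, Y)] @ wpow X b @ [(False, Y)]) @ concat (map (\<lambda>(a, b). wpow X a @ [(True, Y)] @ wpow X b @ [(False, Y)]) (zip as bs))"
    by simp
  also have "peq (Q_rels n) \<dots> ((wpow X a @ [(True, Y)] @ wpow X b @ [(False, Y)]) @ wpow X (sum_list as - sum_list bs))"
    by (rule pr_congL[OF Cons(2)])
  also have "peq (Q_rels n) \<dots> (wpow X (a - b) @ wpow X (sum_list as - sum_list bs))"
    by (rule pr_congR[OF F])
  also have "peq (Q_rels n) \<dots> (wpow X (a - b + (sum_list as - sum_list bs)))"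
    by (rule wpow_add)
  finally show ?case by (simp add: algebra_simps)
qed


lemma D5: "peq (Q_rels n) (wpow X (int n) @ wpow X (int n)) []"
proof -
  have "peq (Q_rels n) (wpow X (int n) @ [(True,Y)]) ([(True,Y),(True,Y)] @ [(True,Y)])"
    by (rule pr_congR[OF D3])
  also have "[(True,Y),(True,Y)] @ [(True,Y)] = [(True,Y)] @ [(True,Y),(True,Y)]" by simp
  also have "peq (Q_rels n) \<dots> ([(True,Y)] @ wpow X (int n))"
    by (rule pr_congL[OF pr_sym[OF D3]])
  also have "peq (Q_rels n) \<dots> (wpow X (- int n) @ [(True,Y)])" by (rule E)
  finally have "peq (Q_rels n) ((wpow X (int n) @ [(True,Y)]) @ [(False,Y)]) ((wpow X (- int n) @ [(True,Y)]) @ [(False,Y)])"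
    by (rule pr_congR)
  then have h: "peq (Q_rels n) (wpow X (int n)) (wpow X (- int n))"
    using pr_canc[of "Q_rels n" "wpow X (int n)" True Y "[]"] pr_canc[of "Q_rels n" "wpow X (- int n)" True Y "[]"]
    by (auto intro: peq_trans pr_sym)
  have "peq (Q_rels n) (wpow X (int n) @ wpow X (int n)) (wpow X (int n) @ wpow X (- int n))"
    by (rule pr_congL[OF h])
  also have "peq (Q_rels n) \<dots> (wpow X (int n + - int n))" by (rule wpow_add)
  finally show ?thesis by simp
qed

lemma M1: "peq (Q_rels n) (wpow X (c + 2 * int n)) (wpow X c)"
proof -
  have "peq (Q_rels n) (wpow X (c + 2 * int n)) (wpow X c @ wpow X (2 * int n))"
    by (rule pr_sym[OF wpow_add])
  also have "peq (Q_rels n) \<dots> (wpow X c @ (wpow X (int n) @ wpow X (int n)))"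
    using pr_congL[OF pr_sym[OF wpow_add[of "Q_rels n" X "int n" "int n"]]] by simp
  also have "peq (Q_rels n) \<dots> (wpow X c @ [])" by (rule pr_congL[OF D5])
  finally show ?thesis by simp
qed

lemma M2: "peq (Q_rels n) (wpow X (a + 2 * int n * q)) (wpow X a)"
proof (induction q rule: int_induct[where k=0])
  case base then show ?case by (simp add: pr_refl)
next
  case (step1 i)
  have eq: "a + 2 * int n * (i + 1) = (a + 2 * int n * i) + 2 * int n" by (simp add: algebra_simps)
  have "peq (Q_rels n) (wpow X (a + 2 * int n * (i + 1))) (wpow X (a + 2 * int n * i))"
    by (subst eq) (rule M1)
  then show ?case using step1(2) by (rule peq_trans)
next
  case (step2 i)
  have eq: "a + 2 * int n * i = (a + 2 * int n * (i - 1)) + 2 * int n" by (simp add: algebra_simps)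
  have "peq (Q_rels n) (wpow X (a + 2 * int n * i)) (wpow X (a + 2 * int n * (i - 1)))"
    by (subst eq) (rule M1)
  then show ?case using step2(2) by (blast intro: peq_trans pr_sym)
qed

lemma M3: "peq (Q_rels n) (wpow X a) (wpow X (a mod (2 * int n)))"
proof -
  have "a = a mod (2 * int n) + 2 * int n * (a div (2 * int n))" by simp
  then show ?thesis using M2[of n "a mod (2 * int n)" "a div (2 * int n)"] by simp
qed

definition nf :: "int \<Rightarrow> bool \<Rightarrow> gen fword" where
  "nf a b = wpow X a @ (if b then [(True, Y)] else [])"

lemma nf_step: "\<exists>a' b'. peq (Q_rels n) (nf a b @ [l]) (nf a' b')"
proof -
  obtain s g where l: "l = (s, g)" by (cases l)
  show ?thesis
  proof (cases b)
    case False
    show ?thesis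
    proof (cases g)
      case X
      show ?thesis
      proof (cases s)
        case True
        then show ?thesis using L1[of "Q_rels n" X a] False X l
          by (intro exI[of _ "a+1"] exI[of _ False]) (simp add: nf_def)
      next
        case f: False
        then show ?thesis using L2[of "Q_rels n" X a] False X l
          by (intro exI[of _ "a-1"] exI[of _ False]) (simp add: nf_def)
      qed
    next
      case Y
      show ?thesis
      proof (cases s)
        case True
        then show ?thesis using False Y l
          by (intro exI[of _ "a"] exI[of _ True]) (simp add: nf_def pr_refl)
      next
        case f: False
        have "peq (Q_rels n) (wpow X a @ [(False,Y)]) (wpow X a @ (wpow X (- int n) @ [(True,Y)]))"
          by (rule pr_congL[OF D4])
        also have "peq (Q_rels n) \<dots> (wpow X (a + - int n) @ [(True,Y)])"
          using pr_congR[OF wpow_add[of "Q_rels n" X a "- int n"], of "[(True,Y)]"] by simp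
        finally show ?thesis using f False Y l
          by (intro exI[of _ "a + - int n"] exI[of _ True]) (simp add: nf_def)
      qed
    qed
  next
    case True
    show ?thesis
    proof (cases g)
      case X
      show ?thesis
      proof (cases s)
        case t: True
        have "peq (Q_rels n) (wpow X a @ [(True,Y),(True,X)]) (wpow X a @ [(False,X),(True,Y)])"
          by (rule pr_congL[OF D1])
        also have "peq (Q_rels n) \<dots> (wpow X (a - 1) @ [(True,Y)])"
          using pr_congR[OF L2[of "Q_rels n" X a], of "[(True,Y)]"] by simp
        finally show ?thesis using t True X l
          by (intro exI[of _ "a - 1"] exI[of _ True]) (simp add: nf_def)
      next
        case f: False
        have "peq (Q_rels n) (wpow X a @ [(True,Y),(False,X)]) (wpow X a @ [(True,X),(True,Y)])"
          by (rule pr_congL[OF D2])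
        also have "peq (Q_rels n) \<dots> (wpow X (a + 1) @ [(True,Y)])"
          using pr_congR[OF L1[of "Q_rels n" X a], of "[(True,Y)]"] by simp
        finally show ?thesis using f True X l
          by (intro exI[of _ "a + 1"] exI[of _ True]) (simp add: nf_def)
      qed
    next
      case Y
      show ?thesis
      proof (cases s)
        case t: True
        have "peq (Q_rels n) (wpow X a @ [(True,Y),(True,Y)]) (wpow X a @ wpow X (int n))"
          by (rule pr_congL[OF pr_sym[OF D3]])
        also have "peq (Q_rels n) \<dots> (wpow X (a + int n))" by (rule wpow_add)
        finally show ?thesis using t True Y l
          by (intro exI[of _ "a + int n"] exI[of _ False]) (simp add: nf_def)
      next
        case f: False
        show ?thesis using f True Y l pr_canc[of "Q_rels n" "wpow X a" True Y "[]"]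
          by (intro exI[of _ a] exI[of _ False]) (simp add: nf_def)
      qed
    qed
  qed
qed

lemma nf_all: "1 \<le> n \<Longrightarrow> \<exists>a \<in> {0..<2 * int n}. \<exists>b. peq (Q_rels n) w (nf a b)"
proof (induction w rule: rev_induct)
  case Nil
  show ?case by (rule bexI[of _ 0]) (use Nil in \<open>auto simp: nf_def pr_refl\<close>)
next
  case (snoc l w)
  then obtain a b where "peq (Q_rels n) w (nf a b)" by blast
  then have 1: "peq (Q_rels n) (w @ [l]) (nf a b @ [l])" by (rule pr_congR)
  obtain a' b' where 2: "peq (Q_rels n) (nf a b @ [l]) (nf a' b')" using nf_step by blast
  have 3: "peq (Q_rels n) (nf a' b') (nf (a' mod (2 * int n)) b')"
    unfolding nf_def by (rule pr_congR[OF M3])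
  have "peq (Q_rels n) (w @ [l]) (nf (a' mod (2 * int n)) b')"
    using 1 2 3 by (blast intro: peq_trans)
  moreover have "a' mod (2 * int n) \<in> {0..<2 * int n}" using snoc(2) by simp
  ultimately show ?case by blast
qed

lemma Q_finite: "1 \<le> n \<Longrightarrow> finite (carrier (Q_group n))"
proof -
  assume n: "1 \<le> n"
  have "carrier (Q_group n) \<subseteq> (\<lambda>(a, b). pres_rel (Q_rels n) `` {nf a b}) ` ({0..<2 * int n} \<times> UNIV)"
  proof
    fix C assume "C \<in> carrier (Q_group n)"
    then obtain w where C: "C = pres_rel (Q_rels n) `` {w}"
      by (auto simp: Q_group_def presented_group_def quotient_def)
    obtain a b where ab: "a \<in> {0..<2 * int n}" "peq (Q_rels n) w (nf a b)" using nf_all[OF n] by blast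
    then have "C = pres_rel (Q_rels n) `` {nf a b}"
      unfolding C peq_def by (simp add: equiv_class_eq[OF equiv_pr])
    then show "C \<in> (\<lambda>(a, b). pres_rel (Q_rels n) `` {nf a b}) ` ({0..<2 * int n} \<times> UNIV)"
      using ab(1) by force
  qed
  moreover have "finite ({0..<2 * int n} \<times> (UNIV :: bool set))" by simp
  ultimately show ?thesis by (meson finite_imageI finite_subset)
qed


lemma W_triv:
  assumes "length ns = length ms"
  shows "peq (Q_rels n) (concat (map (\<lambda>(a, b). wpow X a @ [(True, Y)] @ wpow X b @ [(False, Y)])
                 (zip (ns @ [1 - sum_list ns]) (ms @ [1 - sum_list ms])))) []"
  using G[of "ns @ [1 - sum_list ns]" "ms @ [1 - sum_list ms]" n] assms by simp

lemma P_sub_Q: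
  assumes "length ns = length ms"
  shows "(u, v) \<in> pres_rel (P_rels n ns ms) \<Longrightarrow> (u, v) \<in> pres_rel (Q_rels n)"
proof (induction rule: pres_rel.induct)
  case (prefl w) show ?case by (rule pres_rel.prefl)
next
  case (psym u v) then show ?case by (blast intro: pres_rel.psym)
next
  case (ptrans u v w) then show ?case by (blast intro: pres_rel.ptrans)
next
  case (pcancel u l v) show ?case by (rule pres_rel.pcancel)
next
  case (prel r u v)
  show ?case
  proof (cases "r = wpow X (int n) @ wpow Y (-2)")
    case True
    then have "r \<in> Q_rels n" by (simp add: Q_rels_def)
    then show ?thesis by (rule pres_rel.prel)
  next
    case False
    then have "r = concat (map (\<lambda>(a, b). wpow X a @ [(True, Y)] @ wpow X b @ [(False, Y)])
                 (zip (ns @ [1 - sum_list ns]) (ms @ [1 - sum_list ms])))"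
      using prel(1) unfolding P_rels_def by blast
    then have "peq (Q_rels n) r []" using W_triv[OF assms, of n] by (simp only:)
    then show ?thesis using pr_cong[of "Q_rels n" r "[]" u v] by (simp add: peq_def)
  qed
qed

definition hmap :: "nat \<Rightarrow> gen fword set \<Rightarrow> gen fword set" where
  "hmap n A = (\<Union>a\<in>A. pres_rel (Q_rels n) `` {a})"

lemma hmap_class:
  assumes "length ns = length ms"
  shows "hmap n (pres_rel (P_rels n ns ms) `` {w}) = pres_rel (Q_rels n) `` {w}"
proof -
  have "pres_rel (Q_rels n) `` {a} = pres_rel (Q_rels n) `` {w}"
    if "a \<in> pres_rel (P_rels n ns ms) `` {w}" for a
    using that P_sub_Q[OF assms] equiv_class_eq[OF equiv_pr] by (metis Image_singleton_iff pres_rel.psym)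
  moreover have "w \<in> pres_rel (P_rels n ns ms) `` {w}" by (simp add: pres_rel.prefl)
  ultimately show ?thesis unfolding hmap_def by blast
qed

lemma mult_class:
  "monoid.mult (presented_group R) (pres_rel R `` {a}) (pres_rel R `` {b}) = pres_rel R `` {a @ b}"
proof -
  have "pres_rel R `` {a' @ b'} = pres_rel R `` {a @ b}"
    if "(a, a') \<in> pres_rel R" "(b, b') \<in> pres_rel R" for a' b'
  proof -
    have "peq R (a @ b) (a' @ b)" using pr_congR that(1) by (auto simp: peq_def)
    also have "peq R (a' @ b) (a' @ b')" using pr_congL that(2) by (auto simp: peq_def)
    finally show ?thesis unfolding peq_def by (metis equiv_class_eq[OF equiv_pr])
  qed
  moreover have "a \<in> pres_rel R `` {a}" "b \<in> pres_rel R `` {b}" by (simp_all add: pres_rel.prefl)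
  ultimately have "(\<Union>a'\<in>pres_rel R `` {a}. \<Union>b'\<in>pres_rel R `` {b}. pres_rel R `` {a' @ b'}) = pres_rel R `` {a @ b}"
    by blast
  then show ?thesis unfolding presented_group_def by (simp only: monoid.simps)
qed

theorem corollary3p8:
  fixes n k :: nat and ns ms :: "int list"
  assumes "n \<ge> 2" and "k \<ge> 1"
    and "length ns = k" and "length ms = k"
    and "\<forall>i\<in>set ns. i \<noteq> 0" and "\<forall>i\<in>set ms. i \<noteq> 0"
    and "P_group n ns ms \<cong> Q_group n"
  shows "\<exists>h \<in> iso (P_group n ns ms) (Q_group n).
           h (gen_class (P_rels n ns ms) X) = gen_class (Q_rels n) X \<and>
           h (gen_class (P_rels n ns ms) Y) = gen_class (Q_rels n) Y"
proof -
  have len: "length ns = length ms" using assms by simp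
  let ?P = "P_rels n ns ms" and ?Q = "Q_rels n"
  have cP: "carrier (P_group n ns ms) = UNIV // pres_rel ?P"
    by (simp add: P_group_def presented_group_def)
  have cQ: "carrier (Q_group n) = UNIV // pres_rel ?Q"
    by (simp add: Q_group_def presented_group_def)
  have img: "hmap n ` carrier (P_group n ns ms) = carrier (Q_group n)"
  proof
    show "hmap n ` carrier (P_group n ns ms) \<subseteq> carrier (Q_group n)"
      unfolding cP cQ by (auto simp: quotient_def hmap_class[OF len])
    show "carrier (Q_group n) \<subseteq> hmap n ` carrier (P_group n ns ms)"
    proof
      fix C assume "C \<in> carrier (Q_group n)"
      then obtain w where C: "C = pres_rel ?Q `` {w}" unfolding cQ by (auto simp: quotient_def)
      then have "C = hmap n (pres_rel ?P `` {w})" by (simp add: hmap_class[OF len])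
      moreover have "pres_rel ?P `` {w} \<in> carrier (P_group n ns ms)" unfolding cP by (auto simp: quotient_def)
      ultimately show "C \<in> hmap n ` carrier (P_group n ns ms)" by blast
    qed
  qed
  have hom: "hmap n \<in> hom (P_group n ns ms) (Q_group n)"
  proof -
    have "hmap n (x \<otimes>\<^bsub>P_group n ns ms\<^esub> y) = hmap n x \<otimes>\<^bsub>Q_group n\<^esub> hmap n y"
      if xP: "x \<in> carrier (P_group n ns ms)" and yP: "y \<in> carrier (P_group n ns ms)" for x y
    proof -
      obtain a where x: "x = pres_rel ?P `` {a}"
        using xP unfolding cP by (elim quotientE) blast
      obtain b where y: "y = pres_rel ?P `` {b}"
        using yP unfolding cP by (elim quotientE) blast
      show ?thesis unfolding x y P_group_def Q_group_def
        by (simp add: mult_class hmap_class[OF len])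
    qed
    moreover have "hmap n \<in> carrier (P_group n ns ms) \<rightarrow> carrier (Q_group n)"
      using img by blast
    ultimately show ?thesis unfolding hom_def by blast
  qed
  have finQ: "finite (carrier (Q_group n))" using Q_finite assms(1) by simp
  obtain g where g: "g \<in> iso (P_group n ns ms) (Q_group n)" using assms(7) unfolding is_iso_def by blast
  then have bg: "bij_betw g (carrier (P_group n ns ms)) (carrier (Q_group n))" by (simp add: iso_def)
  then have finP: "finite (carrier (P_group n ns ms))" using finQ bij_betw_finite by blast
  have ce: "card (carrier (P_group n ns ms)) = card (carrier (Q_group n))" using bg by (rule bij_betw_same_card)
  have "card (hmap n ` carrier (P_group n ns ms)) = card (carrier (P_group n ns ms))"
    unfolding img ce ..
  then have "inj_on (hmap n) (carrier (P_group n ns ms))"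
    by (rule eq_card_imp_inj_on[OF finP])
  then have "hmap n \<in> iso (P_group n ns ms) (Q_group n)"
    using hom img unfolding iso_def bij_betw_def by blast
  moreover have "hmap n (gen_class ?P X) = gen_class ?Q X" "hmap n (gen_class ?P Y) = gen_class ?Q Y"
    by (simp_all add: gen_class_def hmap_class[OF len])
  ultimately show ?thesis by blast
qed

end
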